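(* Let $F_R(n)$ be the $n\times n$ Fibonacci--Redheffer matrix. Then, as $n\to\infty$, \[ \det(F_R(n))\sim C_0\,\phi^{\frac{n(n+1)}{2}}\,5^{-\frac{n}{2}}, \] where $C_0=C\cdot C_\phi\approx -0.7921376$, with $C=\lim_{n\to\infty}\sum_{k=1}^n\frac{\mu(k)}{F_k}$ and \[ C_\phi=\prod_{k=1}^{\infty}\left(1-b^k\right)\approx 1.226742,\qquad b=-\phi^{-2}. \]
   Context: The Fibonacci numbers are $F_1=F_2=1$, $F_n=F_{n-1}+F_{n-2}$ for $n\ge 3$, and $\phi=\frac{1+\sqrt5}{2}$ is the golden ratio. The Fibonacci--Redheffer matrix $F_R(n)=[F_R(i,j)]_{i,j=1}^n$ is defined by $F_R(i,j)=1$ if $j=1$; $F_R(i,j)=F_i$ if $i\mid j$; and $F_R(i,j)=0$ otherwise. $\mu$ denotes the Möbius function. For sequences, $a_n\sim b_n$ means $\lim_{n\to\infty} b_n/a_n=1$. *)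

theory Defs
  imports "HOL-Analysis.Analysis" "HOL-Number_Theory.Fib"
    "HOL-Computational_Algebra.Squarefree" "HOL-Library.Landau_Symbols"
    "Jordan_Normal_Form.Determinant"
begin

text \<open>Moebius function (mu 0 = 0 by convention; only used for k >= 1).\<close>
definition moebius :: "nat \<Rightarrow> real" where
  "moebius n = (if n = 0 \<or> \<not> squarefree n then 0 else (-1) ^ card (prime_factors n))"

definition phi :: real where "phi = (1 + sqrt 5) / 2"

text \<open>Fibonacci--Redheffer matrix F_R(n), n x n; the JNF matrix is 0-indexed, so
  entry (i,j) of the JNF matrix is F_R(i+1,j+1). Library fib: fib 1 = fib 2 = 1.\<close>
definition fib_redheffer :: "nat \<Rightarrow> real mat" where
  "fib_redheffer n = mat n n (\<lambda>(i, j).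
      if j + 1 = 1 then 1
      else if (i + 1) dvd (j + 1) then real (fib (i + 1)) else 0)"

definition const_C :: real where
  "const_C = lim (\<lambda>n. \<Sum>k=1..n. moebius k / real (fib k))"

definition const_C_phi :: real where
  "const_C_phi = (\<Prod>k. 1 - (- (phi powr (-2))) ^ (Suc k))"

end

theory Submission
  imports Defs
begin


lemma alt_pow_sum_zero:
  assumes "finite A" "A \<noteq> {}"
  shows "(\<Sum>X\<in>Pow A. (-1::real) ^ card X) = 0"
proof -
  have "(\<Prod>x\<in>A. (1::real) - 1) = (\<Sum>X\<in>Pow A. (-1) ^ card X * (\<Prod>x\<in>X. 1) * (\<Prod>x\<in>A-X. 1))"
    by (rule prod_diff_conv_sum [OF assms(1)])
  moreover have "(\<Prod>x\<in>A. (1::real) - 1) = 0" using assms by (simp add: card_gt_0_iff)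
  ultimately show ?thesis by simp
qed

lemma prime_factors_prod_primes:
  assumes "finite S" "\<forall>p\<in>S. prime (p::nat)"
  shows "prime_factors (\<Prod>S) = S"
proof -
  have "prime_factors (\<Prod>S) = \<Union>((prime_factors \<circ> (\<lambda>x. x)) ` S)"
    using assms by (intro prime_factors_prod) auto
  also have "\<dots> = S" using assms by (auto simp: prime_prime_factors)
  finally show ?thesis .
qed

lemma squarefree_prod_primes:
  assumes "finite S" "\<forall>p\<in>S. prime (p::nat)"
  shows "squarefree (\<Prod>S)"
  using assms by (intro squarefree_prod_coprime) (auto simp: primes_coprime squarefree_prime)

lemma squarefree_prod_pf:
  assumes "squarefree (d::nat)"
  shows "\<Prod>(prime_factors d) = d"
proof -
  have d0: "d \<noteq> 0" using assms not_squarefree_0 by metis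
  have "(\<Prod>p \<in> prime_factors d. p ^ multiplicity p d) = normalize d"
    by (rule prod_prime_factors[OF d0])
  moreover have "\<forall>p\<in>prime_factors d. multiplicity p d = 1"
    using assms squarefree_factorial_semiring'[OF d0] by simp
  ultimately show ?thesis by simp
qed

lemma moebius_sum_divisors:
  assumes "m > (1::nat)"
  shows "(\<Sum>d | d dvd m. moebius d) = 0"
proof -
  define P where "P = prime_factors m"
  have m0: "m \<noteq> 0" using assms by auto
  have fP: "finite P" unfolding P_def by simp
  have P_ne: "P \<noteq> {}" unfolding P_def using assms
    using prime_factor_nat[of m] m0 in_prime_factors_iff[of _ m] assms by force
  define D where "D = {d. d dvd m \<and> squarefree d}"
  have fin: "finite {d. d dvd m}" using m0 by simp
  have "(\<Sum>d | d dvd m. moebius d) = (\<Sum>d\<in>D. (-1) ^ card (prime_factors d))"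
    unfolding D_def
    by (rule sum.mono_neutral_cong_right[OF fin]) (auto simp: moebius_def, metis gr0I not_squarefree_0)
  also have "\<dots> = (\<Sum>X\<in>Pow P. (-1::real) ^ card X)"
  proof (rule sum.reindex_bij_witness[where i = "\<lambda>X. \<Prod>X" and j = "prime_factors"])
    fix X assume X: "X \<in> Pow P"
    then have fX: "finite X" using fP finite_subset by auto
    have pX: "\<forall>p\<in>X. prime p" using X unfolding P_def by auto
    show "prime_factors (\<Prod>X) = X" by (rule prime_factors_prod_primes[OF fX pX])
    have sq: "squarefree (\<Prod>X)" by (rule squarefree_prod_primes[OF fX pX])
    have p0: "\<Prod>X \<noteq> 0" using sq not_squarefree_0 by metis
    have "\<Prod>X dvd m"
    proof (subst prime_multiplicity_le_imp_dvd[OF p0 m0], intro allI impI)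
      fix p :: nat assume pp: "prime p"
      show "multiplicity p (\<Prod>X) \<le> multiplicity p m"
      proof (cases "p \<in> X")
        case True
        then have "p \<in> prime_factors m" using X P_def by auto
        then have "multiplicity p m \<ge> 1"
          by (simp add: prime_factors_multiplicity)
        moreover have "multiplicity p (\<Prod>X) \<le> 1"
          using sq pp squarefree_factorial_semiring''[OF p0] by simp
        ultimately show ?thesis by linarith
      next
        case False
        then have "p \<notin> prime_factors (\<Prod>X)" using \<open>prime_factors (\<Prod>X) = X\<close> by simp
        then have "multiplicity p (\<Prod>X) = 0" using pp p0
          by (simp add: prime_factors_multiplicity)
        then show ?thesis by simp
      qed
    qed
    then show "\<Prod>X \<in> D" unfolding D_def using sq by simp
  next
    fix d assume "d \<in> D"
    then have d: "d dvd m" "squarefree d" unfolding D_def by auto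
    show "(-1::real) ^ card (prime_factors d) = (-1) ^ card (prime_factors d)" by simp
    show "\<Prod>(prime_factors d) = d" by (rule squarefree_prod_pf[OF d(2)])
    show "prime_factors d \<in> Pow P" unfolding P_def using dvd_prime_factors[OF m0 d(1)]
      by simp
  qed
  also have "\<dots> = 0" by (rule alt_pow_sum_zero[OF fP P_ne])
  finally show ?thesis .
qed

lemma moebius_1: "moebius 1 = 1"
  by (simp add: moebius_def)

lemma moebius_Suc0: "moebius (Suc 0) = 1"
  by (simp add: moebius_def)

lemma dvd_Suc_pos: "(x::nat) dvd Suc j \<Longrightarrow> Suc 0 \<le> x"
  by (cases x) auto

lemma fr_carrier: "fib_redheffer n \<in> carrier_mat n n"
  by (simp add: fib_redheffer_def)

lemma fr_index: "i < n \<Longrightarrow> j < n \<Longrightarrow> fib_redheffer n $$ (i,j) =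
   (if j = 0 then 1 else if Suc i dvd Suc j then real (fib (Suc i)) else 0)"
  by (simp add: fib_redheffer_def)

definition Lmat :: "nat \<Rightarrow> real mat" where
  "Lmat n = mat n n (\<lambda>(i,j). if i = 0 then moebius (Suc j) / real (fib (Suc j)) else if i = j then 1 else 0)"

lemma Lmat_carrier: "Lmat n \<in> carrier_mat n n"
  by (simp add: Lmat_def)

lemma det_Lmat: "det (Lmat n) = 1"
proof -
  have ut: "upper_triangular (Lmat n)"
    by (auto simp: upper_triangular_def Lmat_def)
  have "det (Lmat n) = prod_list (diag_mat (Lmat n))"
    by (rule det_upper_triangular[OF ut Lmat_carrier])
  also have "\<dots> = (\<Prod>i = 0..<n. Lmat n $$ (i,i))"
    by (simp add: prod_list_diag_prod Lmat_def)
  also have "\<dots> = (\<Prod>i = 0..<n. 1)"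
    by (rule prod.cong) (auto simp: Lmat_def moebius_1 moebius_Suc0)
  finally show ?thesis by simp
qed

lemma sum_dvd_moebius_row:
  assumes "j < n" "j > 0"
  shows "(\<Sum>k<n. moebius (Suc k) / real (fib (Suc k)) *
           (if Suc k dvd Suc j then real (fib (Suc k)) else 0)) = 0"
proof -
  have "(\<Sum>k<n. moebius (Suc k) / real (fib (Suc k)) *
           (if Suc k dvd Suc j then real (fib (Suc k)) else 0))
      = (\<Sum>k<n. (\<lambda>d. if d dvd Suc j then moebius d else 0) (Suc k))"
    by (rule sum.cong) (auto simp: fib_neq_0_nat)
  also have "\<dots> = (\<Sum>d=1..n. if d dvd Suc j then moebius d else 0)"
    by (rule sum_bounds_lt_plus1)
  also have "\<dots> = (\<Sum>d\<in>{d\<in>{1..n}. d dvd Suc j}. moebius d)"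
    by (rule sum.inter_filter[symmetric]) simp
  also have "{d\<in>{1..n}. d dvd Suc j} = {d. d dvd Suc j}"
    using assms by (auto dest: dvd_imp_le dvd_Suc_pos)
  also have "(\<Sum>d | d dvd Suc j. moebius d) = 0"
    using assms by (intro moebius_sum_divisors) simp
  finally show ?thesis .
qed

lemma det_fib_redheffer:
  assumes "n > 0"
  shows "det (fib_redheffer n) = (\<Sum>k=1..n. moebius k / real (fib k)) * (\<Prod>k=1..n. real (fib k))"
proof -
  define A where "A = fib_redheffer n"
  define T where "T = Lmat n * A"
  have A: "A \<in> carrier_mat n n" unfolding A_def by (rule fr_carrier)
  have T: "T \<in> carrier_mat n n" unfolding T_def using mult_carrier_mat[OF Lmat_carrier A] .
  have "det T = det (Lmat n) * det A"
    unfolding T_def by (rule det_mult[OF Lmat_carrier A])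
  then have detA: "det A = det T" by (simp add: det_Lmat)
  have T_entry: "T $$ (i,j) = (\<Sum>k<n. Lmat n $$ (i,k) * A $$ (k,j))" if "i < n" "j < n" for i j
    using that A unfolding T_def
    by (auto simp: scalar_prod_def Lmat_def lessThan_atLeast0 intro!: sum.cong)
  have T_low: "T $$ (i,j) = A $$ (i,j)" if "i < n" "j < n" "i > 0" for i j
  proof -
    have "T $$ (i,j) = (\<Sum>k<n. (if k = i then A $$ (k,j) else 0))"
      unfolding T_entry[OF that(1,2)] using that
      by (intro sum.cong) (auto simp: Lmat_def)
    also have "\<dots> = A $$ (i,j)" using that by simp
    finally show ?thesis .
  qed
  have T00: "T $$ (0,0) = (\<Sum>k=1..n. moebius k / real (fib k))"
  proof -
    have "T $$ (0,0) = (\<Sum>k<n. moebius (Suc k) / real (fib (Suc k)))"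
      unfolding T_entry[OF assms assms] using assms
      by (intro sum.cong) (auto simp: Lmat_def A_def fr_index)
    also have "\<dots> = (\<Sum>k=1..n. moebius k / real (fib k))"
      by (rule sum_bounds_lt_plus1)
    finally show ?thesis .
  qed
  have T0j: "T $$ (0,j) = 0" if "j < n" "j > 0" for j
  proof -
    have "T $$ (0,j) = (\<Sum>k<n. moebius (Suc k) / real (fib (Suc k)) *
           (if Suc k dvd Suc j then real (fib (Suc k)) else 0))"
      unfolding T_entry[OF assms that(1)] using that
      by (intro sum.cong) (auto simp: Lmat_def A_def fr_index)
    also have "\<dots> = 0" by (rule sum_dvd_moebius_row[OF that])
    finally show ?thesis .
  qed
  have "det T = (\<Sum>j<n. T $$ (0,j) * cofactor T 0 j)"
    by (rule laplace_expansion_row[OF T assms])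
  also have "\<dots> = (\<Sum>j<n. if j = 0 then T $$ (0,0) * cofactor T 0 0 else 0)"
    by (rule sum.cong) (auto simp: T0j)
  also have "\<dots> = T $$ (0,0) * cofactor T 0 0" using assms by simp
  also have "cofactor T 0 0 = det (mat_delete T 0 0)" by (simp add: cofactor_def)
  also have "det (mat_delete T 0 0) = (\<Prod>k=1..n. real (fib k))"
  proof -
    define M where "M = mat_delete T 0 0"
    have M: "M \<in> carrier_mat (n-1) (n-1)" unfolding M_def using mat_delete_carrier[OF T] .
    have Mi: "M $$ (i,j) = (if Suc (Suc i) dvd Suc (Suc j) then real (fib (Suc (Suc i))) else 0)"
      if "i < n - 1" "j < n - 1" for i j
      using that T unfolding M_def mat_delete_def
      by (simp add: T_low A_def fr_index)
    have ut: "upper_triangular M"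
      unfolding upper_triangular_def
    proof (intro allI impI)
      fix i j assume "i < dim_row M" "j < i"
      then show "M $$ (i,j) = 0" using M Mi[of i j] by (auto dest: dvd_imp_le)
    qed
    have "det M = prod_list (diag_mat M)" by (rule det_upper_triangular[OF ut M])
    also have "\<dots> = (\<Prod>i=0..<n-1. M $$ (i,i))" using M by (simp add: prod_list_diag_prod)
    also have "\<dots> = (\<Prod>i=0..<n-1. real (fib (Suc (Suc i))))"
      by (rule prod.cong) (auto simp: Mi)
    also have "\<dots> = (\<Prod>k=1..n. real (fib k))"
    proof -
      have "(\<Prod>k=1..n. real (fib k)) = (\<Prod>k<n. real (fib (Suc k)))"
        by (simp add: prod.atLeast1_atMost_eq)
      also have "\<dots> = (\<Prod>k<Suc (n-1). real (fib (Suc k)))" using assms by simp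
      also have "\<dots> = (\<Prod>k<n-1. real (fib (Suc (Suc k)))) * real (fib 1)"
        by (subst prod.lessThan_Suc_shift) simp
      finally show ?thesis by (simp add: lessThan_atLeast0)
    qed
    finally show ?thesis unfolding M_def .
  qed
  finally show ?thesis using T00 detA unfolding A_def by simp
qed

lemma fib_lower: "8 * (3/2::real)^k \<le> real (fib (k+6)) \<and> 8 * (3/2::real)^(Suc k) \<le> real (fib (Suc k+6))"
proof (induction k)
  case 0
  have "fib 6 = 8" "fib 7 = 13" by (simp_all add: numeral_eq_Suc)
  then show ?case by simp
next
  case (Suc k)
  have e: "fib (Suc (Suc k) + 6) = fib (Suc k + 6) + fib (k + 6)"
    using fib_plus_2[of "k+6"] by (simp add: algebra_simps)
  have "8 * (3/2::real)^(Suc (Suc k)) \<le> 8 * (3/2)^(Suc k) + 8 * (3/2)^k" by simp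
  also have "\<dots> \<le> real (fib (Suc (Suc k) + 6))" using Suc.IH e by simp
  finally show ?case using Suc.IH by simp
qed

definition fsum :: "nat \<Rightarrow> real" where "fsum k = moebius k / real (fib k)"

lemma abs_moebius: "\<bar>moebius k\<bar> \<le> 1"
  by (simp add: moebius_def)

lemma fsum_bound: "\<bar>fsum (k+6)\<bar> \<le> (1/8) * (2/3::real)^k"
proof -
  have f: "8 * (3/2::real)^k \<le> real (fib (k+6))" using fib_lower by blast
  have pos: "0 < 8 * (3/2::real)^k" by simp
  have "\<bar>fsum (k+6)\<bar> = \<bar>moebius (k+6)\<bar> / real (fib (k+6))" by (simp add: fsum_def)
  also have "\<dots> \<le> 1 / real (fib (k+6))"
    using abs_moebius pos f by (intro divide_right_mono) auto
  also have "\<dots> \<le> 1 / (8 * (3/2)^k)"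
  proof -
    have fp: "0 < real (fib (k+6))" using f pos by linarith
    show ?thesis using f pos fp by (intro divide_left_mono) auto
  qed
  also have "\<dots> = (1/8) * (2/3::real)^k" by (simp add: power_divide)
  finally show ?thesis .
qed

lemma geo_sum: "summable (\<lambda>k. (1/8) * (2/3::real)^k) \<and> (\<Sum>k. (1/8) * (2/3::real)^k) = 3/8"
proof -
  have s: "summable (\<lambda>k. (2/3::real)^k)" by (rule summable_geometric) simp
  have "(\<Sum>k. (2/3::real)^k) = 3" by (subst suminf_geometric) auto
  moreover have "(\<Sum>k. (1/8) * (2/3::real)^k) = (1/8) * (\<Sum>k. (2/3::real)^k)"
    by (rule suminf_mult[OF s])
  ultimately show ?thesis using summable_mult[OF s, of "1/8"] by simp
qed

lemma fsum_tail_summable: "summable (\<lambda>k. fsum (k+6))"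
  by (rule summable_comparison_test[OF _ geo_sum[THEN conjunct1]]) (use fsum_bound in auto)

lemma fsum_summable: "summable fsum"
  using fsum_tail_summable summable_iff_shift by blast

lemma fsum_tail_le: "(\<Sum>k. fsum (k+6)) \<le> 3/8"
proof -
  have "(\<Sum>k. fsum (k+6)) \<le> (\<Sum>k. (1/8) * (2/3::real)^k)"
    by (rule suminf_le[OF _ fsum_tail_summable geo_sum[THEN conjunct1]]) (use fsum_bound abs_le_D1 in blast)
  then show ?thesis using geo_sum by simp
qed

lemma moebius_prime: "prime p \<Longrightarrow> moebius p = -1"
  by (simp add: moebius_def squarefree_prime prime_prime_factors)

lemma moebius_4: "moebius 4 = 0"
proof -
  have "\<not> squarefree (4::nat)"
    by (rule not_squarefreeI[of 2]) auto
  then show ?thesis by (simp add: moebius_def)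
qed

lemma fsum_init: "(\<Sum>k<6. fsum k) = -7/10"
proof -
  have p: "prime (2::nat)" "prime (3::nat)" "prime (5::nat)" by simp_all
  have m: "moebius 2 = -1" "moebius 3 = -1" "moebius 5 = -1"
    using moebius_prime p by auto
  have fb: "fib 3 = 2" "fib 4 = 3" "fib 5 = 5" by (simp_all add: numeral_eq_Suc)
  have "(\<Sum>k<6. fsum k) = fsum 0 + fsum 1 + fsum 2 + fsum 3 + fsum 4 + fsum 5"
    by (simp add: numeral_eq_Suc)
  also have "\<dots> = -7/10"
    by (simp add: fsum_def m fb moebius_4 moebius_1 moebius_Suc0)
  finally show ?thesis .
qed

lemma fsum_suminf_neg: "suminf fsum < 0"
proof -
  have "suminf fsum = (\<Sum>k. fsum (k+6)) + (\<Sum>k<6. fsum k)"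
    by (rule suminf_split_initial_segment[OF fsum_summable])
  then show ?thesis using fsum_init fsum_tail_le by simp
qed

lemma S_eq: "(\<Sum>k=1..n. moebius k / real (fib k)) = (\<Sum>k<Suc n. fsum k)"
proof -
  have "(\<Sum>k<Suc n. fsum k) = fsum 0 + (\<Sum>k<n. fsum (Suc k))"
    by (rule sum.lessThan_Suc_shift)
  also have "(\<Sum>k<n. fsum (Suc k)) = (\<Sum>k=1..n. fsum k)"
    by (simp add: sum.atLeast1_atMost_eq)
  finally show ?thesis by (simp add: fsum_def)
qed

lemma S_lim: "(\<lambda>n. \<Sum>k=1..n. moebius k / real (fib k)) \<longlonglongrightarrow> suminf fsum"
proof -
  have "(\<lambda>n. \<Sum>k<n. fsum k) \<longlonglongrightarrow> suminf fsum"
    by (rule summable_LIMSEQ[OF fsum_summable])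
  then have "(\<lambda>n. \<Sum>k<Suc n. fsum k) \<longlonglongrightarrow> suminf fsum"
    by (rule LIMSEQ_Suc)
  then show ?thesis by (simp only: S_eq)
qed

lemma const_C_eq: "const_C = suminf fsum"
  unfolding const_C_def using S_lim by (rule limI)



definition bq :: real where "bq = - (phi powr (-2))"

lemma phi_gt1: "phi > 1"
proof -
  have "sqrt 5 > 1" by simp
  then show ?thesis unfolding phi_def by simp
qed

lemma bq_alt: "bq = - 1 / phi^2"
proof -
  have "phi powr (-2) = inverse (phi powr 2)" by (simp add: powr_minus)
  also have "phi powr 2 = phi^2" using phi_gt1 by (simp add: powr_numeral)
  finally show ?thesis unfolding bq_def by (simp add: divide_inverse)
qed

lemma abs_bq: "\<bar>bq\<bar> < 1"
proof -
  have "phi^2 > 1" using phi_gt1 by (simp add: one_less_power)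
  then show ?thesis unfolding bq_alt by (simp add: divide_less_eq)
qed

lemma factor_nz: "1 - bq ^ k \<noteq> 0" if "k > 0" for k
proof -
  have "\<bar>bq ^ k\<bar> < 1" using abs_bq that by (simp add: power_abs power_less_one_iff)
  then show ?thesis by auto
qed

lemma conv_prod: "convergent_prod (\<lambda>k. 1 - bq ^ (Suc k))"
proof -
  have "summable (\<lambda>k. \<bar>bq\<bar> ^ k)"
    using abs_bq by (simp add: summable_geometric)
  then have "summable (\<lambda>k. \<bar>bq\<bar> * \<bar>bq\<bar> ^ k)" by (rule summable_mult)
  then have "summable (\<lambda>k. \<bar>bq\<bar> ^ (Suc k))" by simp
  then have "summable (\<lambda>k. norm ((1 - bq ^ (Suc k)) - 1))"
    by (simp add: power_abs abs_mult del: power_Suc)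
  then have "abs_convergent_prod (\<lambda>k. 1 - bq ^ (Suc k))"
    by (rule summable_imp_abs_convergent_prod)
  then show ?thesis by (rule abs_convergent_prod_imp_convergent_prod)
qed

lemma Cphi_eq: "const_C_phi = (\<Prod>k. 1 - bq ^ (Suc k))"
  unfolding const_C_phi_def bq_def ..

lemma Cphi_nz: "const_C_phi \<noteq> 0"
  unfolding Cphi_eq by (rule prodinf_nonzero[OF conv_prod]) (rule factor_nz, simp)

lemma Q_lim: "(\<lambda>n. \<Prod>k<n. 1 - bq ^ (Suc k)) \<longlonglongrightarrow> const_C_phi"
proof -
  have "(\<lambda>n. \<Prod>k\<le>n. 1 - bq ^ (Suc k)) \<longlonglongrightarrow> const_C_phi"
    unfolding Cphi_eq by (rule convergent_prod_LIMSEQ[OF conv_prod])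
  then have "(\<lambda>n. \<Prod>k<Suc n. 1 - bq ^ (Suc k)) \<longlonglongrightarrow> const_C_phi"
    by (simp add: lessThan_Suc_atMost)
  then show ?thesis by (rule LIMSEQ_imp_Suc)
qed

lemma binet: "real (fib k) = phi ^ k * (1 - bq ^ k) / sqrt 5"
proof -
  define psi :: real where "psi = (1 - sqrt 5) / 2"
  have "real (fib k) = (phi ^ k - psi ^ k) / sqrt 5"
    unfolding phi_def psi_def by (rule fib_closed_form)
  moreover have "psi = phi * bq"
  proof -
    have s5: "sqrt 5 * sqrt 5 = (5::real)" by simp
    have nz: "1 + sqrt 5 \<noteq> 0" by (smt (verit) real_sqrt_ge_zero)
    have pb: "phi * bq = - 1 / phi" using phi_gt1 unfolding bq_alt by (simp add: power2_eq_square)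
    have key: "(1 - sqrt 5) * (1 + sqrt 5) = -4" using s5 by (simp add: algebra_simps)
    have "- 1 / phi = - 2 / (1 + sqrt 5)" unfolding phi_def by simp
    also have "\<dots> = psi" unfolding psi_def
    proof (rule iffD2[OF frac_eq_eq])
      show "1 + sqrt 5 \<noteq> 0" by (rule nz)
      show "(2::real) \<noteq> 0" by simp
      show "- 2 * 2 = (1 - sqrt 5) * (1 + sqrt 5)" using key by linarith
    qed
    finally have "- 1 / phi = psi" .
    then show ?thesis using pb by simp
  qed
  ultimately show ?thesis by (simp add: power_mult_distrib right_diff_distrib)
qed

lemma prod_fib:
  "(\<Prod>k=1..n. real (fib k)) = (\<Prod>k<n. 1 - bq ^ (Suc k)) *
      (phi powr (real (n * (n + 1)) / 2) * 5 powr (- real n / 2))"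
proof -
  have "(\<Prod>k=1..n. real (fib k)) = (\<Prod>k=1..n. phi ^ k * (1 - bq ^ k) * (1 / sqrt 5))"
    by (rule prod.cong) (auto simp: binet)
  also have "\<dots> = (\<Prod>k=1..n. phi ^ k) * (\<Prod>k=1..n. 1 - bq ^ k) * (1 / sqrt 5) ^ n"
    by (simp only: prod.distrib prod_constant card_atLeastAtMost diff_Suc_1)
  also have "(\<Prod>k=1..n. phi ^ k) = phi ^ (\<Sum>k=1..n. k)"
    by (rule power_sum[symmetric])
  also have "(\<Sum>k=1..n. k) = n * (n + 1) div 2"
    using gauss_sum_from_Suc_0[of n, where ?'a = nat] by simp
  also have "phi ^ (n * (n + 1) div 2) = phi powr (real (n * (n + 1)) / 2)"
  proof -
    have "even (n * (n + 1))" by simp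
    then have e: "real (n * (n + 1)) / 2 = real (n * (n + 1) div 2)"
      by (simp add: real_of_nat_div)
    show ?thesis unfolding e by (rule powr_realpow[symmetric]) (use phi_gt1 in simp)
  qed
  also have "(\<Prod>k=1..n. 1 - bq ^ k) = (\<Prod>k<n. 1 - bq ^ (Suc k))"
    by (simp add: prod.atLeast1_atMost_eq)
  also have "(1 / sqrt 5) ^ n = 5 powr (- real n / 2)"
  proof -
    have p5: "(0::real) < 5 powr (1/2)" by simp
    have "sqrt 5 ^ n = (5 powr (1/2)) ^ n" using powr_half_sqrt[of 5] by simp
    also have "\<dots> = (5 powr (1/2)) powr (real n)" by (rule powr_realpow[OF p5, symmetric])
    also have "\<dots> = 5 powr (1/2 * real n)" by (rule powr_powr)
    also have "1/2 * real n = real n / 2" by simp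
    finally have a: "sqrt 5 ^ n = 5 powr (real n / 2)" .
    have b: "5 powr (- (real n / 2)) = inverse (5 powr (real n / 2))"
      by (rule powr_minus)
    have c: "- real n / 2 = - (real n / 2)" by simp
    have "(1 / sqrt 5) ^ n = inverse (sqrt 5 ^ n)" by (simp add: power_one_over inverse_eq_divide)
    then show ?thesis unfolding c b a .
  qed
  finally show ?thesis by (simp only: mult_ac)
qed

theorem theorem3:
  shows "convergent (\<lambda>n. \<Sum>k=1..n. moebius k / real (fib k))
    \<and> convergent_prod (\<lambda>k. 1 - (- (phi powr (-2))) ^ (Suc k) :: real)
    \<and> (\<lambda>n. Determinant.det (fib_redheffer n)) \<sim>[at_top]
       (\<lambda>n. const_C * const_C_phi * phi powr (real (n * (n + 1)) / 2) * 5 powr (- real n / 2))"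
proof (intro conjI)
  show "convergent (\<lambda>n. \<Sum>k=1..n. moebius k / real (fib k))"
    using S_lim by (rule convergentI)
  show "convergent_prod (\<lambda>k. 1 - (- (phi powr (-2))) ^ (Suc k) :: real)"
    using conv_prod unfolding bq_def .
  define S where "S = (\<lambda>n. \<Sum>k=1..n. moebius k / real (fib k))"
  define Q where "Q = (\<lambda>n. \<Prod>k<n. 1 - bq ^ (Suc k))"
  define H where "H = (\<lambda>n::nat. phi powr (real (n * (n + 1)) / 2) * 5 powr (- real n / 2))"
  have CC: "const_C * const_C_phi \<noteq> 0"
    using Cphi_nz fsum_suminf_neg const_C_eq by simp
  have "(\<lambda>n. S n * Q n) \<longlonglongrightarrow> const_C * const_C_phi"
    unfolding S_def Q_def const_C_eq using S_lim Q_lim by (rule tendsto_mult)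
  then have "(\<lambda>n. S n * Q n) \<sim>[at_top] (\<lambda>_. const_C * const_C_phi)"
    using CC by (rule tendsto_imp_asymp_equiv_const)
  then have main: "(\<lambda>n. S n * Q n * H n) \<sim>[at_top] (\<lambda>n. const_C * const_C_phi * H n)"
    by (rule asymp_equiv_mult) (rule asymp_equiv_refl)
  have e1: "eventually (\<lambda>n. S n * Q n * H n = Determinant.det (fib_redheffer n)) at_top"
  proof (rule eventually_mono[OF eventually_ge_at_top[of 1]])
    fix n :: nat assume "n \<ge> 1"
    then have "Determinant.det (fib_redheffer n) = S n * (\<Prod>k=1..n. real (fib k))"
      unfolding S_def using det_fib_redheffer[of n] by simp
    also have "\<dots> = S n * (Q n * H n)" unfolding prod_fib Q_def H_def ..
    finally show "S n * Q n * H n = Determinant.det (fib_redheffer n)"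
      by (simp add: mult.assoc)
  qed
  have e2: "eventually (\<lambda>n. const_C * const_C_phi * H n =
      const_C * const_C_phi * phi powr (real (n * (n + 1)) / 2) * 5 powr (- real n / 2)) at_top"
    unfolding H_def by (simp add: mult.assoc)
  show "(\<lambda>n. Determinant.det (fib_redheffer n)) \<sim>[at_top]
       (\<lambda>n. const_C * const_C_phi * phi powr (real (n * (n + 1)) / 2) * 5 powr (- real n / 2))"
    by (rule asymp_equiv_cong[OF e1 e2, THEN iffD1, OF main])
qed

end
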